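(* Consider a bipartite experiment where Alice chooses $x\in\{0,1\}$ and obtains $a\in\{\pm1\}$ with probability $\pi_{a|x}:=p(a|x)$, and conditioned on $(a,x)$ Bob's system is in the pure qubit state $\rho_{a|x}=|\psi_{a|x}\rangle\langle\psi_{a|x}|$. Bob chooses $y\in\{0,1\}$ and performs the binary projective measurement with observable $B_y=\mathbf b_y\cdot\boldsymbol\sigma$, $\|\mathbf b_y\|=1$, obtaining $b\in\{\pm1\}$, so that $p(a,b|x,y)=\pi_{a|x}\mathrm{Tr}\big(\rho_{a|x}\tfrac{I+bB_y}{2}\big)$. Let $E_{xy}=\sum_{a,b}ab\,p(a,b|x,y)$ and $S_{\mathrm{CHSH}}=E_{00}+E_{01}+E_{10}-E_{11}$. For each $x$ let $$D_x=\eta_1^2+\eta_2^2+2\eta_1\eta_2\sqrt{1-|\gamma_x|^2}+|\gamma_x|^2(\eta_1\eta_2-\eta_{\min}^2),$$ with $\eta_1=\pi_{+|x}$, $\eta_2=\pi_{-|x}$, $\eta_{\min}=\min\{\eta_1,\eta_2\}$, $\gamma_x=\langle\psi_{+|x}|\psi_{-|x}\rangle$. Then $$S_{\mathrm{CHSH}}\le 2\sqrt{(2D_0-1)^2+(2D_1-1)^2}.$$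
   Context: $\boldsymbol\sigma$ denotes the vector of Pauli matrices. $D_x$ is the fidelity-based discriminability of the conditional two-state ensemble $\{(\pi_{+|x},\rho_{+|x}),(\pi_{-|x},\rho_{-|x})\}$. *)

theory Defs
  imports "HOL-Analysis.Analysis"
begin

text \<open>Qubit state vectors live in complex^2, operators in complex^2^2.
  Index 1::2 is the first basis vector, 2::2 the second.\<close>

definition pauli_x :: "complex^2^2" where
  "pauli_x = (\<chi> i j. if i = j then 0 else 1)"

definition pauli_y :: "complex^2^2" where
  "pauli_y = (\<chi> i j. if i = j then 0 else if i = 1 then - \<i> else \<i>)"

definition pauli_z :: "complex^2^2" where
  "pauli_z = (\<chi> i j. if i \<noteq> j then 0 else if i = 1 then 1 else -1)"

definition pauli_obs :: "real^3 \<Rightarrow> complex^2^2" where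
  "pauli_obs b = (b$1) *\<^sub>R pauli_x + (b$2) *\<^sub>R pauli_y + (b$3) *\<^sub>R pauli_z"

definition ket_bra :: "complex^2 \<Rightarrow> complex^2^2" where
  "ket_bra \<psi> = (\<chi> i j. \<psi>$i * cnj (\<psi>$j))"

definition braket :: "complex^2 \<Rightarrow> complex^2 \<Rightarrow> complex" where
  "braket \<psi> \<phi> = (\<Sum>i\<in>UNIV. cnj (\<psi>$i) * \<phi>$i)"

definition corr_prob ::
  "(int \<Rightarrow> nat \<Rightarrow> real) \<Rightarrow> (int \<Rightarrow> nat \<Rightarrow> complex^2) \<Rightarrow> (nat \<Rightarrow> real^3)
     \<Rightarrow> int \<Rightarrow> int \<Rightarrow> nat \<Rightarrow> nat \<Rightarrow> real" where
  "corr_prob \<pi> \<psi> bv a b x y =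
     \<pi> a x * Re (trace (ket_bra (\<psi> a x) **
        ((1/2::real) *\<^sub>R (mat 1 + (of_int b :: real) *\<^sub>R pauli_obs (bv y)))))"

definition correlator ::
  "(int \<Rightarrow> nat \<Rightarrow> real) \<Rightarrow> (int \<Rightarrow> nat \<Rightarrow> complex^2) \<Rightarrow> (nat \<Rightarrow> real^3)
     \<Rightarrow> nat \<Rightarrow> nat \<Rightarrow> real" where
  "correlator \<pi> \<psi> bv x y =
     (\<Sum>a\<in>{-1,1}. \<Sum>b\<in>{-1,1}. of_int (a * b) * corr_prob \<pi> \<psi> bv a b x y)"

definition S_CHSH ::
  "(int \<Rightarrow> nat \<Rightarrow> real) \<Rightarrow> (int \<Rightarrow> nat \<Rightarrow> complex^2) \<Rightarrow> (nat \<Rightarrow> real^3) \<Rightarrow> real" where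
  "S_CHSH \<pi> \<psi> bv = correlator \<pi> \<psi> bv 0 0 + correlator \<pi> \<psi> bv 0 1
      + correlator \<pi> \<psi> bv 1 0 - correlator \<pi> \<psi> bv 1 1"

definition discr ::
  "(int \<Rightarrow> nat \<Rightarrow> real) \<Rightarrow> (int \<Rightarrow> nat \<Rightarrow> complex^2) \<Rightarrow> nat \<Rightarrow> real" where
  "discr \<pi> \<psi> x =
     (let \<eta>1 = \<pi> 1 x; \<eta>2 = \<pi> (-1) x; \<eta>min = min \<eta>1 \<eta>2;
          g = cmod (braket (\<psi> 1 x) (\<psi> (-1) x))
      in \<eta>1\<^sup>2 + \<eta>2\<^sup>2 + 2 * \<eta>1 * \<eta>2 * sqrt (1 - g\<^sup>2) + g\<^sup>2 * (\<eta>1 * \<eta>2 - \<eta>min\<^sup>2))"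

end

theory Submission
  imports Defs
begin

definition bloch :: "complex^2 \<Rightarrow> real^3" where
  "bloch \<psi> = (\<chi> k. if k = 1 then 2 * Re (cnj (\<psi>$1) * \<psi>$2)
                 else if k = 2 then 2 * Im (cnj (\<psi>$1) * \<psi>$2)
                 else (cmod (\<psi>$1))\<^sup>2 - (cmod (\<psi>$2))\<^sup>2)"

lemma bloch_comp: "bloch \<psi> $ 1 = 2 * Re (cnj (\<psi>$1) * \<psi>$2)"
  "bloch \<psi> $ 2 = 2 * Im (cnj (\<psi>$1) * \<psi>$2)"
  "bloch \<psi> $ 3 = (cmod (\<psi>$1))\<^sup>2 - (cmod (\<psi>$2))\<^sup>2"
  by (simp_all add: bloch_def)

lemma norm2_c2: "(norm (\<psi>::complex^2))\<^sup>2 = (cmod (\<psi>$1))\<^sup>2 + (cmod (\<psi>$2))\<^sup>2"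
  by (simp add: norm_vec_def L2_set_def sum_2)

lemma tr_lemma:
  "Re (trace (ket_bra \<psi> ** ((1/2::real) *\<^sub>R (mat 1 + r *\<^sub>R pauli_obs b))))
     = ((norm \<psi>)\<^sup>2 + r * (bloch \<psi> \<bullet> b)) / 2"
  unfolding norm2_c2 inner_vec_def sum_3 bloch_comp cmod_power2
  by (simp add: trace_def matrix_matrix_mult_def ket_bra_def pauli_obs_def pauli_x_def
     pauli_y_def pauli_z_def mat_def sum_2 power2_eq_square algebra_simps del: complex_mod_mult_cnj)


lemma corr_lemma:
  "correlator \<pi> \<psi> bv x y = \<pi> 1 x * (bloch (\<psi> 1 x) \<bullet> bv y) - \<pi> (-1) x * (bloch (\<psi> (-1) x) \<bullet> bv y)"
  unfolding correlator_def corr_prob_def tr_lemma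
  by (simp add: field_simps)


lemma bl_alg:
  fixes a b c d :: complex
  shows "(2 * Re (cnj a * b)) * (2 * Re (cnj c * d)) + (2 * Im (cnj a * b)) * (2 * Im (cnj c * d))
     + ((cmod a)\<^sup>2 - (cmod b)\<^sup>2) * ((cmod c)\<^sup>2 - (cmod d)\<^sup>2)
     = 2 * (cmod (cnj a * c + cnj b * d))\<^sup>2 - ((cmod a)\<^sup>2 + (cmod b)\<^sup>2) * ((cmod c)\<^sup>2 + (cmod d)\<^sup>2)"
  unfolding cmod_power2
  apply (simp del: complex_mod_mult_cnj)
  apply algebra
  done

lemma bl_norm_alg:
  fixes a b :: complex
  shows "(2 * Re (cnj a * b)) * (2 * Re (cnj a * b)) + (2 * Im (cnj a * b)) * (2 * Im (cnj a * b))
     + ((cmod a)\<^sup>2 - (cmod b)\<^sup>2) * ((cmod a)\<^sup>2 - (cmod b)\<^sup>2)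
     = ((cmod a)\<^sup>2 + (cmod b)\<^sup>2)\<^sup>2"
  unfolding cmod_power2
  apply (simp del: complex_mod_mult_cnj)
  apply algebra
  done

lemma l1: fixes c s :: real assumes "0 \<le> c" "c \<le> 1" "0 \<le> s" "s \<le> 1"
  shows "c * s * (1 + s) \<le> 2 * s"
proof -
  have "c * (1 + s) \<le> 1 * 2" using assms by (intro mult_mono) auto
  then show ?thesis using assms mult_left_mono[of "c * (1 + s)" 2 s] by (simp add: algebra_simps)
qed
lemma l2: fixes c s :: real assumes "0 \<le> c" "c \<le> 1" "0 \<le> s" "s \<le> 1"
  shows "c\<^sup>2 * s * (1 - s) \<le> 1"
proof -
  have "c\<^sup>2 \<le> 1" using assms by (simp add: power_le_one)
  moreover have "s * (1 - s) \<le> 1" using assms by (simp add: mult_le_one)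
  ultimately show ?thesis using assms
    by (metis mult.assoc mult_le_one diff_ge_0_iff_ge mult_nonneg_nonneg zero_le_power2)
qed
lemma l3: fixes p s c B :: real
  assumes "c = 1 - 2 * p" "B = 2 + 2 * c + 2 * s - c * s - c * s\<^sup>2 - c\<^sup>2 * s + c\<^sup>2 * s\<^sup>2"
  shows "(2 * (p\<^sup>2 + (1 - p)\<^sup>2 + 2 * p * (1 - p) * s + (1 - s\<^sup>2) * (p * (1 - p) - p\<^sup>2)) - 1)\<^sup>2 - (1 - 4 * p * (1 - p) * (1 - s\<^sup>2))
      = 2 * p * (1 - s) * s * c * B"
  unfolding assms by (simp add: power2_eq_square algebra_simps)
lemma core:
  fixes p q g :: real
  assumes "0 \<le> p" "p \<le> q" "p + q = 1" "0 \<le> g" "g \<le> 1"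
  shows "1 - 4 * p * q * g\<^sup>2 \<le> (2 * (p\<^sup>2 + q\<^sup>2 + 2 * p * q * sqrt (1 - g\<^sup>2) + g\<^sup>2 * (p * q - p\<^sup>2)) - 1)\<^sup>2"
proof -
  define s where "s = sqrt (1 - g\<^sup>2)"
  have g2: "g\<^sup>2 \<le> 1" using assms by (simp add: power_le_one)
  have s0: "0 \<le> s" and s2: "s\<^sup>2 = 1 - g\<^sup>2" using g2 by (auto simp: s_def)
  have s1: "s \<le> 1" unfolding s_def by simp
  have gg: "g\<^sup>2 = 1 - s\<^sup>2" using s2 by simp
  have q: "q = 1 - p" using assms by simp
  define c where "c = 1 - 2 * p"
  have c0: "0 \<le> c" using assms by (simp add: c_def)
  have c1: "c \<le> 1" using assms by (simp add: c_def)
  define B where "B = 2 + 2 * c + 2 * s - c * s - c * s\<^sup>2 - c\<^sup>2 * s + c\<^sup>2 * s\<^sup>2"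
  have B0: "0 \<le> B"
  proof -
    have "c * s * (1 + s) \<le> 2 * s" by (rule l1[OF c0 c1 s0 s1])
    moreover have "c\<^sup>2 * s * (1 - s) \<le> 1" by (rule l2[OF c0 c1 s0 s1])
    moreover have "c\<^sup>2 \<le> 1" using c0 c1 by (simp add: power_le_one)
    ultimately show ?thesis using c0 unfolding B_def by (simp add: algebra_simps power2_eq_square; linarith)
  qed
  have eq: "(2 * (p\<^sup>2 + q\<^sup>2 + 2 * p * q * s + g\<^sup>2 * (p * q - p\<^sup>2)) - 1)\<^sup>2 - (1 - 4 * p * q * g\<^sup>2)
      = 2 * p * (1 - s) * s * c * B"
    unfolding gg q by (rule l3[OF c_def B_def])
  have nn: "0 \<le> 2 * p * (1 - s) * s * c * B" using assms s0 s1 c0 B0 by simp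
  have "0 \<le> (2 * (p\<^sup>2 + q\<^sup>2 + 2 * p * q * s + g\<^sup>2 * (p * q - p\<^sup>2)) - 1)\<^sup>2 - (1 - 4 * p * q * g\<^sup>2)"
    unfolding eq by (rule nn)
  then show ?thesis unfolding s_def[symmetric] by linarith
qed

lemma bloch_inner:
  "bloch \<psi> \<bullet> bloch \<phi> = 2 * (cmod (braket \<psi> \<phi>))\<^sup>2 - (norm \<psi>)\<^sup>2 * (norm \<phi>)\<^sup>2"
  unfolding norm2_c2 inner_vec_def sum_3 bloch_comp braket_def sum_2 inner_real_def
  by (rule bl_alg)

lemma bloch_norm:
  "(norm (bloch \<psi>))\<^sup>2 = ((norm \<psi>)\<^sup>2)\<^sup>2"
proof -
  have "(norm (bloch \<psi>))\<^sup>2 = bloch \<psi> \<bullet> bloch \<psi>" by (rule power2_norm_eq_inner)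
  also have "\<dots> = ((cmod (\<psi>$1))\<^sup>2 + (cmod (\<psi>$2))\<^sup>2)\<^sup>2"
    unfolding inner_vec_def sum_3 bloch_comp inner_real_def by (rule bl_norm_alg)
  finally show ?thesis by (simp add: norm2_c2)
qed

lemma vnorm:
  fixes r1 r2 :: "real^3" and e1 e2 g :: real
  assumes "norm r1 = 1" "norm r2 = 1" "r1 \<bullet> r2 = 2 * g\<^sup>2 - 1" "e1 + e2 = 1"
  shows "(norm (e1 *\<^sub>R r1 - e2 *\<^sub>R r2))\<^sup>2 = 1 - 4 * e1 * e2 * g\<^sup>2"
proof -
  have "(norm (e1 *\<^sub>R r1 - e2 *\<^sub>R r2))\<^sup>2 = e1\<^sup>2 * (r1 \<bullet> r1) + e2\<^sup>2 * (r2 \<bullet> r2) - 2 * e1 * e2 * (r1 \<bullet> r2)"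
    unfolding power2_norm_eq_inner
    by (simp add: inner_diff_left inner_diff_right inner_commute power2_eq_square algebra_simps)
  also have "\<dots> = e1\<^sup>2 + e2\<^sup>2 - 2 * e1 * e2 * (2 * g\<^sup>2 - 1)"
    using assms by (simp add: power2_norm_eq_inner[symmetric])
  also have "\<dots> = (e1 + e2)\<^sup>2 - 4 * e1 * e2 * g\<^sup>2" by (simp add: power2_eq_square algebra_simps)
  finally show ?thesis using assms by simp
qed

lemma discr_bound:
  fixes \<pi> :: "int \<Rightarrow> nat \<Rightarrow> real" and \<psi> :: "int \<Rightarrow> nat \<Rightarrow> complex^2"
  assumes n1: "\<pi> 1 x \<ge> 0" and n2: "\<pi> (-1) x \<ge> 0" and s: "\<pi> 1 x + \<pi> (-1) x = 1"
    and u1: "norm (\<psi> 1 x) = 1" and u2: "norm (\<psi> (-1) x) = 1"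
  shows "(norm (\<pi> 1 x *\<^sub>R bloch (\<psi> 1 x) - \<pi> (-1) x *\<^sub>R bloch (\<psi> (-1) x)))\<^sup>2
         \<le> (2 * discr \<pi> \<psi> x - 1)\<^sup>2"
proof -
  define g where "g = cmod (braket (\<psi> 1 x) (\<psi> (-1) x))"
  define e1 where "e1 = \<pi> 1 x"
  define e2 where "e2 = \<pi> (-1) x"
  have r1: "norm (bloch (\<psi> 1 x)) = 1"
    using bloch_norm[of "\<psi> 1 x"] u1 by (smt (verit) norm_ge_zero power2_eq_1_iff)
  have r2: "norm (bloch (\<psi> (-1) x)) = 1"
    using bloch_norm[of "\<psi> (-1) x"] u2 by (smt (verit) norm_ge_zero power2_eq_1_iff)
  have ip: "bloch (\<psi> 1 x) \<bullet> bloch (\<psi> (-1) x) = 2 * g\<^sup>2 - 1"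
    using bloch_inner[of "\<psi> 1 x" "\<psi> (-1) x"] u1 u2 by (simp add: g_def)
  have "bloch (\<psi> 1 x) \<bullet> bloch (\<psi> (-1) x) \<le> 1"
    using norm_cauchy_schwarz[of "bloch (\<psi> 1 x)" "bloch (\<psi> (-1) x)"] r1 r2 by simp
  then have "g\<^sup>2 \<le> 1" using ip by simp
  moreover have g0: "0 \<le> g" by (simp add: g_def)
  ultimately have g1: "g \<le> 1" by (smt (verit) power2_le_imp_le one_power2)
  have V: "(norm (e1 *\<^sub>R bloch (\<psi> 1 x) - e2 *\<^sub>R bloch (\<psi> (-1) x)))\<^sup>2 = 1 - 4 * e1 * e2 * g\<^sup>2"
    using vnorm[OF r1 r2 ip] s by (simp add: e1_def e2_def)
  have D: "discr \<pi> \<psi> x = e1\<^sup>2 + e2\<^sup>2 + 2 * e1 * e2 * sqrt (1 - g\<^sup>2) + g\<^sup>2 * (e1 * e2 - (min e1 e2)\<^sup>2)"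
    unfolding discr_def Let_def g_def e1_def e2_def by simp
  have e10: "0 \<le> e1" and e20: "0 \<le> e2" and es: "e1 + e2 = 1" and es': "e2 + e1 = 1"
    using n1 n2 s by (simp_all add: e1_def e2_def)
  have Vx: "(norm (\<pi> 1 x *\<^sub>R bloch (\<psi> 1 x) - \<pi> (-1) x *\<^sub>R bloch (\<psi> (-1) x)))\<^sup>2 = 1 - 4 * e1 * e2 * g\<^sup>2"
    using V by (simp only: e1_def e2_def)
  show ?thesis
  proof (cases "e1 \<le> e2")
    case True
    have m: "min e1 e2 = e1" using True by simp
    have D': "discr \<pi> \<psi> x = e1\<^sup>2 + e2\<^sup>2 + 2 * e1 * e2 * sqrt (1 - g\<^sup>2) + g\<^sup>2 * (e1 * e2 - e1\<^sup>2)"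
      using D unfolding m .
    show ?thesis unfolding Vx D' by (rule core[OF e10 True es g0 g1])
  next
    case False
    then have le: "e2 \<le> e1" by simp
    have m: "min e1 e2 = e2" using False by simp
    have D': "discr \<pi> \<psi> x = e2\<^sup>2 + e1\<^sup>2 + 2 * e2 * e1 * sqrt (1 - g\<^sup>2) + g\<^sup>2 * (e2 * e1 - e2\<^sup>2)"
      using D unfolding m by (simp only: ac_simps)
    have eq: "4 * e1 * e2 * g\<^sup>2 = 4 * e2 * e1 * g\<^sup>2" by simp
    show ?thesis unfolding Vx D' eq by (rule core[OF e20 le es' g0 g1])
  qed
qed

lemma sq_bound: "((a::real) + b)\<^sup>2 \<le> 2 * (a\<^sup>2 + b\<^sup>2)"
proof -
  have "(a + b)\<^sup>2 + (a - b)\<^sup>2 = 2 * (a\<^sup>2 + b\<^sup>2)" by (simp add: power2_eq_square algebra_simps)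
  then show ?thesis using zero_le_power2[of "a - b"] by linarith
qed

lemma chsh_vec:
  fixes v0 v1 b0 b1 :: "real^3"
  assumes "norm b0 = 1" "norm b1 = 1"
  shows "v0 \<bullet> b0 + v0 \<bullet> b1 + v1 \<bullet> b0 - v1 \<bullet> b1 \<le> 2 * sqrt ((norm v0)\<^sup>2 + (norm v1)\<^sup>2)"
proof -
  have "v0 \<bullet> b0 + v0 \<bullet> b1 + v1 \<bullet> b0 - v1 \<bullet> b1 = (v0 + v1) \<bullet> b0 + (v0 - v1) \<bullet> b1"
    by (simp add: inner_add_left inner_diff_left)
  also have "\<dots> \<le> norm (v0 + v1) + norm (v0 - v1)"
    using norm_cauchy_schwarz[of "v0 + v1" b0] norm_cauchy_schwarz[of "v0 - v1" b1] assms by simp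
  also have "\<dots> \<le> sqrt (4 * ((norm v0)\<^sup>2 + (norm v1)\<^sup>2))"
  proof (rule real_le_rsqrt)
    have par: "(norm (v0 + v1))\<^sup>2 + (norm (v0 - v1))\<^sup>2 = 2 * (norm v0)\<^sup>2 + 2 * (norm v1)\<^sup>2"
      unfolding power2_norm_eq_inner
      by (simp add: inner_add_left inner_add_right inner_diff_left inner_diff_right inner_commute)
    have "(norm (v0 + v1) + norm (v0 - v1))\<^sup>2 \<le> 2 * ((norm (v0 + v1))\<^sup>2 + (norm (v0 - v1))\<^sup>2)"
      using sq_bound by blast
    then show "(norm (v0 + v1) + norm (v0 - v1))\<^sup>2 \<le> 4 * ((norm v0)\<^sup>2 + (norm v1)\<^sup>2)"
      using par by simp
  qed
  also have "\<dots> = sqrt 4 * sqrt ((norm v0)\<^sup>2 + (norm v1)\<^sup>2)"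
    by (rule real_sqrt_mult)
  also have "sqrt 4 = (2::real)"
    using real_sqrt_abs[of 2] by simp
  finally show ?thesis by simp
qed

theorem corollary1:
  fixes \<pi> :: "int \<Rightarrow> nat \<Rightarrow> real"
    and \<psi> :: "int \<Rightarrow> nat \<Rightarrow> complex^2"
    and bv :: "nat \<Rightarrow> real^3"
  assumes prob_nonneg: "\<And>a x. a \<in> {-1, 1} \<Longrightarrow> x \<in> {0, 1} \<Longrightarrow> \<pi> a x \<ge> 0"
    and prob_sum: "\<And>x. x \<in> {0, 1} \<Longrightarrow> \<pi> 1 x + \<pi> (-1) x = 1"
    and states_unit: "\<And>a x. a \<in> {-1, 1} \<Longrightarrow> x \<in> {0, 1} \<Longrightarrow> norm (\<psi> a x) = 1"
    and meas_unit: "\<And>y. y \<in> {0, 1} \<Longrightarrow> norm (bv y) = 1"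
  shows "S_CHSH \<pi> \<psi> bv
           \<le> 2 * sqrt ((2 * discr \<pi> \<psi> 0 - 1)\<^sup>2 + (2 * discr \<pi> \<psi> 1 - 1)\<^sup>2)"
proof -
  define v where "v = (\<lambda>x. \<pi> 1 x *\<^sub>R bloch (\<psi> 1 x) - \<pi> (-1) x *\<^sub>R bloch (\<psi> (-1) x))"
  have C: "correlator \<pi> \<psi> bv x y = v x \<bullet> bv y" for x y
    unfolding corr_lemma v_def by (simp add: inner_diff_left)
  have "S_CHSH \<pi> \<psi> bv = v 0 \<bullet> bv 0 + v 0 \<bullet> bv 1 + v 1 \<bullet> bv 0 - v 1 \<bullet> bv 1"
    unfolding S_CHSH_def C by simp
  also have "\<dots> \<le> 2 * sqrt ((norm (v 0))\<^sup>2 + (norm (v 1))\<^sup>2)"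
    by (rule chsh_vec) (use meas_unit in auto)
  also have "\<dots> \<le> 2 * sqrt ((2 * discr \<pi> \<psi> 0 - 1)\<^sup>2 + (2 * discr \<pi> \<psi> 1 - 1)\<^sup>2)"
  proof -
    have "(norm (v x))\<^sup>2 \<le> (2 * discr \<pi> \<psi> x - 1)\<^sup>2" if "x \<in> {0, 1}" for x
      unfolding v_def
      by (rule discr_bound) (use that prob_nonneg prob_sum states_unit in auto)
    then have "(norm (v 0))\<^sup>2 + (norm (v 1))\<^sup>2 \<le> (2 * discr \<pi> \<psi> 0 - 1)\<^sup>2 + (2 * discr \<pi> \<psi> 1 - 1)\<^sup>2"
      by (simp add: add_mono)
    then show ?thesis by simp
  qed
  finally show ?thesis .
qed

end
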